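(* Let $(s_1,s_2)$ and $(s'_1,s'_2)$ be two ordered pairs of involutive elements of $S_n$ and $\beta,\beta'$ their dihedral decompositions. Then $(s_1,s_2)$ is conjugate to $(s'_1,s'_2)$ (i.e. $s'_i=gs_ig^{-1}$, $i=1,2$, for some $g\in S_n$) if and only if $\beta=\beta'$.
   Context: An involutive element is $s\in S_n$ with $s^2=1$ (the identity included). Given an ordered pair $(s_1,s_2)$ of involutions, the infinite dihedral group $D_\infty=\langle\sigma_1,\sigma_2\mid\sigma_1^2=\sigma_2^2=1\rangle$ acts on $\{1,\dots,n\}$ via $\sigma_i\mapsto s_i$. Each orbit is of one of four types: type 1: neither $\sigma_1$ nor $\sigma_2$ has a fixed point in it (even size); type 2: each of $\sigma_1,\sigma_2$ has exactly one fixed point (odd size); type 3: $\sigma_1$ has two fixed points and $\sigma_2$ none (even size); type 4: $\sigma_1$ has none and $\sigma_2$ has two fixed points (even size). The dihedral decomposition of $(s_1,s_2)$ is the collection, for each type $t=1,2,3,4$, of the unordered multiset of sizes of the orbits of type $t$. *)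

theory Defs
  imports "HOL-Combinatorics.Permutations" "HOL-Library.Multiset"
begin

definition involution_Sn :: "nat \<Rightarrow> (nat \<Rightarrow> nat) \<Rightarrow> bool" where
  "involution_Sn n s \<longleftrightarrow> s permutes {1..n} \<and> s \<circ> s = id"

text \<open>One-step relation of the action of the infinite dihedral group generated by sigma_1, sigma_2
  acting via s1, s2; orbits are classes of its reflexive transitive closure.\<close>

definition dih_step :: "(nat \<Rightarrow> nat) \<Rightarrow> (nat \<Rightarrow> nat) \<Rightarrow> (nat \<times> nat) set" where
  "dih_step s1 s2 = {(x, s1 x) | x. True} \<union> {(x, s2 x) | x. True}"

definition dih_orbit :: "(nat \<Rightarrow> nat) \<Rightarrow> (nat \<Rightarrow> nat) \<Rightarrow> nat \<Rightarrow> nat set" where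
  "dih_orbit s1 s2 x = {y. (x, y) \<in> (dih_step s1 s2)\<^sup>*}"

definition dih_orbits :: "nat \<Rightarrow> (nat \<Rightarrow> nat) \<Rightarrow> (nat \<Rightarrow> nat) \<Rightarrow> nat set set" where
  "dih_orbits n s1 s2 = dih_orbit s1 s2 ` {1..n}"

definition num_fixed :: "(nat \<Rightarrow> nat) \<Rightarrow> nat set \<Rightarrow> nat" where
  "num_fixed s Orb = card {x \<in> Orb. s x = x}"

text \<open>Type of an orbit (0 if it fits none of the four types; this never happens for involutions).\<close>

definition orbit_type :: "(nat \<Rightarrow> nat) \<Rightarrow> (nat \<Rightarrow> nat) \<Rightarrow> nat set \<Rightarrow> nat" where
  "orbit_type s1 s2 Orb =
     (if num_fixed s1 Orb = 0 \<and> num_fixed s2 Orb = 0 then 1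
      else if num_fixed s1 Orb = 1 \<and> num_fixed s2 Orb = 1 then 2
      else if num_fixed s1 Orb = 2 \<and> num_fixed s2 Orb = 0 then 3
      else if num_fixed s1 Orb = 0 \<and> num_fixed s2 Orb = 2 then 4
      else 0)"

definition dihedral_decomp :: "nat \<Rightarrow> (nat \<Rightarrow> nat) \<Rightarrow> (nat \<Rightarrow> nat) \<Rightarrow> nat \<Rightarrow> nat multiset" where
  "dihedral_decomp n s1 s2 t =
     (if t \<in> {1..4}
      then image_mset card (mset_set {Orb \<in> dih_orbits n s1 s2. orbit_type s1 s2 Orb = t})
      else {#})"

end

theory Submission
  imports Defs
begin


definition rot :: "(nat \<Rightarrow> nat) \<Rightarrow> (nat \<Rightarrow> nat) \<Rightarrow> nat \<Rightarrow> nat" where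
  "rot s1 s2 x = s2 (s1 x)"

definition fF :: "(nat \<Rightarrow> nat) \<Rightarrow> (nat \<Rightarrow> nat) \<Rightarrow> int \<Rightarrow> nat \<Rightarrow> nat" where
  "fF s1 s2 j = (if 0 \<le> j then rot s1 s2 ^^ nat j else rot s2 s1 ^^ nat (- j))"

primrec act :: "(nat \<Rightarrow> nat) \<Rightarrow> (nat \<Rightarrow> nat) \<Rightarrow> bool list \<Rightarrow> nat \<Rightarrow> nat" where
  "act s1 s2 [] x = x"
| "act s1 s2 (b # w) x = (if b then s1 else s2) (act s1 s2 w x)"

primrec nf :: "bool list \<Rightarrow> int \<times> bool" where
  "nf [] = (0, False)"
| "nf (b # w) = (if b then (- fst (nf w), \<not> snd (nf w)) else (1 - fst (nf w), \<not> snd (nf w)))"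

locale invpair =
  fixes s1 s2 :: "nat \<Rightarrow> nat"
  assumes i1: "\<And>x. s1 (s1 x) = x" and i2: "\<And>x. s2 (s2 x) = x"
begin

lemma fF0[simp]: "fF s1 s2 0 x = x" by (simp add: fF_def)

lemma fF_succ: "fF s1 s2 (j + 1) x = s2 (s1 (fF s1 s2 j x))"
proof (cases "0 \<le> j")
  case True
  then have "nat (j+1) = Suc (nat j)" by simp
  then show ?thesis using True by (simp add: fF_def rot_def)
next
  case False
  show ?thesis
  proof (cases "j = -1")
    case True then show ?thesis by (simp add: fF_def rot_def i1 i2)
  next
    case F2: False
    with False have "nat (-j) = Suc (nat (- (j+1)))" by simp
    then show ?thesis using False F2 by (simp add: fF_def rot_def i1 i2)
  qed
qed

lemma fF_pred: "fF s1 s2 (j - 1) x = s1 (s2 (fF s1 s2 j x))"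
  using fF_succ[of "j - 1" x] by (simp add: i1 i2)

lemma fF_add: "fF s1 s2 (i + j) x = fF s1 s2 i (fF s1 s2 j x)"
proof (induction i rule: int_induct[where k=0])
  case base then show ?case by simp
next
  case (step1 i)
  have "fF s1 s2 (i + 1 + j) x = fF s1 s2 ((i + j) + 1) x" by (simp add: ac_simps)
  also have "\<dots> = s2 (s1 (fF s1 s2 i (fF s1 s2 j x)))" using step1 by (simp add: fF_succ)
  finally show ?case by (simp add: fF_succ)
next
  case (step2 i)
  have "i - 1 + j = (i + j) - 1" by simp
  then have "fF s1 s2 (i - 1 + j) x = fF s1 s2 ((i + j) - 1) x" by (simp only:)
  also have "\<dots> = s1 (s2 (fF s1 s2 i (fF s1 s2 j x)))" using step2 by (simp add: fF_pred)
  finally show ?case by (simp add: fF_pred)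
qed

lemma fF_s1: "s1 (fF s1 s2 j x) = fF s1 s2 (- j) (s1 x)"
proof (induction j rule: int_induct[where k=0])
  case base then show ?case by simp
next
  case (step1 j)
  have "s1 (fF s1 s2 (j+1) x) = s1 (s2 (fF s1 s2 (- j) (s1 x)))" using step1 by (simp add: fF_succ i1)
  also have "\<dots> = fF s1 s2 (- j - 1) (s1 x)" by (simp add: fF_pred)
  finally show ?case by simp
next
  case (step2 j)
  have "s1 (fF s1 s2 (j - 1) x) = s2 (fF s1 s2 j x)" by (simp add: fF_pred i1)
  also have "\<dots> = s2 (s1 (fF s1 s2 (- j) (s1 x)))" by (simp add: step2(2)[symmetric] i1)
  also have "\<dots> = fF s1 s2 (- j + 1) (s1 x)" by (simp only: fF_succ)
  finally show ?case by simp
qed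

lemma s2_fF: "s2 z = fF s1 s2 1 (s1 z)"
  using fF_succ[of 0 "s1 z"] by (simp add: i1)

lemma act_nf: "act s1 s2 w x = (if snd (nf w) then fF s1 s2 (fst (nf w)) (s1 x) else fF s1 s2 (fst (nf w)) x)"
proof (induction w)
  case Nil then show ?case by simp
next
  case (Cons b w)
  show ?case
  proof (cases b)
    case True then show ?thesis using Cons by (simp add: fF_s1 i1)
  next
    case False
    have e: "s2 (fF s1 s2 j y) = fF s1 s2 (1 - j) (s1 y)" for j y
      by (subst s2_fF) (simp add: fF_s1 flip: fF_add)
    show ?thesis using Cons False by (simp add: e i1)
  qed
qed

lemma act_append: "act s1 s2 (u @ v) x = act s1 s2 u (act s1 s2 v x)"
  by (induction u) auto

lemma act_rev: "act s1 s2 (rev v) (act s1 s2 v x) = x"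
  by (induction v arbitrary: x) (auto simp: act_append i1 i2)

end

lemma orbit_act: "dih_orbit s1 s2 x = range (\<lambda>w. act s1 s2 w x)"
proof (intro set_eqI iffI)
  fix y assume "y \<in> dih_orbit s1 s2 x"
  then have "(x, y) \<in> (dih_step s1 s2)\<^sup>*" by (simp add: dih_orbit_def)
  then show "y \<in> range (\<lambda>w. act s1 s2 w x)"
  proof (induction rule: rtrancl_induct)
    case base then show ?case by (auto intro!: range_eqI[where x="[]"])
  next
    case (step y z)
    then obtain w where w: "y = act s1 s2 w x" by auto
    from step(2) have "z = s1 y \<or> z = s2 y" by (auto simp: dih_step_def)
    then show ?case
    proof
      assume "z = s1 y" then show ?thesis using w by (auto intro!: range_eqI[where x="True # w"])
    next
      assume "z = s2 y" then show ?thesis using w by (auto intro!: range_eqI[where x="False # w"])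
    qed
  qed
next
  fix y assume "y \<in> range (\<lambda>w. act s1 s2 w x)"
  then obtain w where w: "y = act s1 s2 w x" by auto
  have "(x, act s1 s2 w x) \<in> (dih_step s1 s2)\<^sup>*"
  proof (induction w)
    case Nil then show ?case by simp
  next
    case (Cons b w)
    have "(act s1 s2 w x, act s1 s2 (b # w) x) \<in> dih_step s1 s2" by (auto simp: dih_step_def)
    with Cons show ?case by (meson rtrancl.rtrancl_into_rtrancl)
  qed
  then show "y \<in> dih_orbit s1 s2 x" using w by (simp add: dih_orbit_def)
qed

lemma orbit_self: "x \<in> dih_orbit s1 s2 x"
  unfolding orbit_act by (auto intro!: range_eqI[where x="[]"])

lemma orbit_s1: "y \<in> dih_orbit s1 s2 x \<Longrightarrow> s1 y \<in> dih_orbit s1 s2 x"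
proof -
  assume "y \<in> dih_orbit s1 s2 x"
  then obtain w where "y = act s1 s2 w x" unfolding orbit_act by auto
  then have "s1 y = act s1 s2 (True # w) x" by simp
  then show ?thesis unfolding orbit_act by blast
qed

lemma orbit_s2: "y \<in> dih_orbit s1 s2 x \<Longrightarrow> s2 y \<in> dih_orbit s1 s2 x"
proof -
  assume "y \<in> dih_orbit s1 s2 x"
  then obtain w where "y = act s1 s2 w x" unfolding orbit_act by auto
  then have "s2 y = act s1 s2 (False # w) x" by simp
  then show ?thesis unfolding orbit_act by blast
qed

lemma orbit_swap: "dih_orbit s2 s1 x = dih_orbit s1 s2 x"
  unfolding dih_orbit_def dih_step_def by (simp add: Un_commute)

lemma act_swap: "act s2 s1 (map Not w) x = act s1 s2 w x"
  by (induction w) auto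

lemma per_exists:
  assumes "p permutes {1..(n::nat)}"
  shows "\<exists>k>0. (p ^^ k) x = x"
proof -
  have "permutation p" using assms permutation_permutes by blast
  then obtain k where "k > 0" "(p ^^ k) x = x" by (rule permutation_self)
  then show ?thesis by blast
qed

definition per :: "(nat \<Rightarrow> nat) \<Rightarrow> nat \<Rightarrow> nat" where
  "per f x = (LEAST k. 0 < k \<and> (f ^^ k) x = x)"

lemma per_props:
  assumes "\<exists>k>0. (f ^^ k) x = x"
  shows "per f x > 0" "(f ^^ k) x = x \<longleftrightarrow> per f x dvd k"
proof -
  let ?r = "per f x"
  have r: "0 < ?r \<and> (f ^^ ?r) x = x" unfolding per_def using assms by (metis (mono_tags, lifting) LeastI)
  then show "per f x > 0" by simp
  have mult: "(f ^^ (?r * q)) x = x" for q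
  proof (induction q)
    case 0 then show ?case by simp
  next
    case (Suc q)
    have "(f ^^ (?r * Suc q)) x = (f ^^ ?r) ((f ^^ (?r * q)) x)" by (simp add: funpow_add)
    then show ?case using Suc r by simp
  qed
  show "(f ^^ k) x = x \<longleftrightarrow> per f x dvd k"
  proof
    assume k: "(f ^^ k) x = x"
    have "k = k mod ?r + ?r * (k div ?r)" by simp
    then have "(f ^^ k) x = (f ^^ (k mod ?r)) ((f ^^ (?r * (k div ?r))) x)"
      by (metis comp_apply funpow_add)
    then have km: "(f ^^ (k mod ?r)) x = x" using k mult by simp
    have "k mod ?r < ?r" using r by simp
    then have "\<not> (0 < k mod ?r \<and> (f ^^ (k mod ?r)) x = x)"
      unfolding per_def using not_less_Least by blast
    with km have "k mod ?r = 0" by simp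
    then show "per f x dvd k" by auto
  next
    assume "per f x dvd k"
    then obtain q where "k = ?r * q" by auto
    then show "(f ^^ k) x = x" using mult by simp
  qed
qed

locale invSn =
  fixes n :: nat and s1 s2 :: "nat \<Rightarrow> nat"
  assumes inv1: "involution_Sn n s1" and inv2: "involution_Sn n s2"
begin

lemma p1: "s1 permutes {1..n}" and p2: "s2 permutes {1..n}"
  using inv1 inv2 by (auto simp: involution_Sn_def)

lemma ii1: "s1 (s1 x) = x" and ii2: "s2 (s2 x) = x"
  using inv1 inv2 unfolding involution_Sn_def by (metis comp_apply id_apply)+

sublocale invpair s1 s2 by unfold_locales (auto simp: ii1 ii2)

abbreviation "Orb x \<equiv> dih_orbit s1 s2 x"
abbreviation "r x \<equiv> per (rot s1 s2) x"

lemma orbit_fF: "y \<in> Orb x \<Longrightarrow> fF s1 s2 j y \<in> Orb x"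
proof (induction j rule: int_induct[where k=0])
  case base then show ?case by simp
next
  case (step1 i) then show ?case by (simp add: fF_succ orbit_s1 orbit_s2)
next
  case (step2 i) then show ?case by (simp add: fF_pred orbit_s1 orbit_s2)
qed

lemma orbit_same: "y \<in> Orb x \<Longrightarrow> Orb y = Orb x"
proof -
  assume "y \<in> Orb x"
  then obtain w where w: "y = act s1 s2 w x" unfolding orbit_act by auto
  have "act s1 s2 u y = act s1 s2 (u @ w) x" for u by (simp add: w act_append)
  moreover have "act s1 s2 u x = act s1 s2 (u @ rev w) y" for u by (simp add: w act_append act_rev)
  ultimately show ?thesis unfolding orbit_act by blast
qed

lemma orbit_sub: "x \<in> {1..n} \<Longrightarrow> Orb x \<subseteq> {1..n}"
proof -
  assume x: "x \<in> {1..n}"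
  have "act s1 s2 w x \<in> {1..n}" for w
  proof (induction w)
    case Nil then show ?case using x by simp
  next
    case (Cons b w) then show ?case
      using permutes_in_image[OF p1] permutes_in_image[OF p2] by (cases b) (simp_all only: act.simps if_True if_False)
  qed
  then show ?thesis unfolding orbit_act by auto
qed

lemma orbit_finite: "x \<in> {1..n} \<Longrightarrow> finite (Orb x)"
  using orbit_sub finite_subset by blast

lemma per_ex: "\<exists>k>0. (rot s1 s2 ^^ k) x = x"
proof -
  have "rot s1 s2 = s2 \<circ> s1" by (simp add: fun_eq_iff rot_def)
  then show ?thesis using per_exists[OF permutes_compose[OF p1 p2]] by simp
qed

lemma r_pos: "r x > 0" using per_props(1)[OF per_ex] .

lemma fF_fix_iff: "fF s1 s2 j x = x \<longleftrightarrow> int (r x) dvd j"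
proof -
  have nn: "fF s1 s2 j x = x \<longleftrightarrow> int (r x) dvd j" if "0 \<le> j" for j
  proof -
    have "fF s1 s2 j x = (rot s1 s2 ^^ nat j) x" using that by (simp add: fF_def)
    moreover have "int (r x) dvd j \<longleftrightarrow> r x dvd nat j" using that
      by (metis int_dvd_int_iff int_nat_eq)
    ultimately show ?thesis using per_props(2)[OF per_ex] by simp
  qed
  have sym: "fF s1 s2 j x = x \<longleftrightarrow> fF s1 s2 (-j) x = x" for j
    by (metis add.right_inverse add.left_inverse fF0 fF_add)
  show ?thesis
  proof (cases "0 \<le> j")
    case True then show ?thesis using nn by simp
  next
    case False then show ?thesis using nn[of "-j"] sym[of j] by simp
  qed
qed

lemma fF_eq_iff: "fF s1 s2 i x = fF s1 s2 j x \<longleftrightarrow> int (r x) dvd (i - j)"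
proof
  assume "fF s1 s2 i x = fF s1 s2 j x"
  then have "fF s1 s2 (-j) (fF s1 s2 i x) = fF s1 s2 (-j) (fF s1 s2 j x)" by simp
  then have "fF s1 s2 (i - j) x = x" by (simp flip: fF_add)
  then show "int (r x) dvd (i - j)" using fF_fix_iff by simp
next
  assume "int (r x) dvd (i - j)"
  then have "fF s1 s2 (i - j) x = x" using fF_fix_iff by simp
  then have "fF s1 s2 j (fF s1 s2 (i - j) x) = fF s1 s2 j x" by simp
  then show "fF s1 s2 i x = fF s1 s2 j x" by (simp flip: fF_add)
qed

lemma fF_mod: "fF s1 s2 j x = fF s1 s2 (int (nat (j mod int (r x)))) x"
proof -
  have "int (nat (j mod int (r x))) = j mod int (r x)" using r_pos by simp
  then show ?thesis by (simp add: fF_eq_iff dvd_minus_mod)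
qed


lemma int_dvd_lt_eq:
  fixes a b R :: nat
  assumes "a < R" "b < R" "int R dvd (int a - int b)"
  shows "a = b"
proof (rule ccontr)
  assume "a \<noteq> b"
  then have "int a - int b \<noteq> 0" by simp
  from dvd_imp_le_int[OF this assms(3)] assms(1,2) show False by simp
qed

lemma fF_s1_eq_iff: "fF s1 s2 i (s1 x) = fF s1 s2 j (s1 x) \<longleftrightarrow> int (r x) dvd (i - j)"
proof -
  have "fF s1 s2 i (s1 x) = fF s1 s2 j (s1 x) \<longleftrightarrow> s1 (fF s1 s2 i (s1 x)) = s1 (fF s1 s2 j (s1 x))"
    by (metis ii1)
  also have "\<dots> \<longleftrightarrow> fF s1 s2 (-i) x = fF s1 s2 (-j) x" by (simp add: fF_s1 ii1)
  also have "\<dots> \<longleftrightarrow> int (r x) dvd (i - j)" by (simp add: fF_eq_iff dvd_diff_commute)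
  finally show ?thesis .
qed

lemma fF_s1_mod: "fF s1 s2 j (s1 x) = fF s1 s2 (int (nat (j mod int (r x)))) (s1 x)"
proof -
  have "int (nat (j mod int (r x))) = j mod int (r x)" using r_pos by simp
  then show ?thesis by (simp add: fF_s1_eq_iff dvd_minus_mod)
qed

lemma inj_fF: "inj_on (\<lambda>k. fF s1 s2 (int k) x) {0..<r x}"
  by (rule inj_onI) (metis atLeastLessThan_iff int_dvd_lt_eq fF_eq_iff)

lemma inj_fF_s1: "inj_on (\<lambda>k. fF s1 s2 (int k) (s1 x)) {0..<r x}"
  by (rule inj_onI) (metis atLeastLessThan_iff int_dvd_lt_eq fF_s1_eq_iff)

lemma mod_lt: "nat (j mod int (r x)) < r x"
  using r_pos by (simp add: nat_less_iff)

lemma orbA: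
  assumes "s1 x = x"
  shows "Orb x = (\<lambda>k. fF s1 s2 (int k) x) ` {0..<r x}"
proof
  show "Orb x \<subseteq> (\<lambda>k. fF s1 s2 (int k) x) ` {0..<r x}"
  proof
    fix y assume "y \<in> Orb x"
    then obtain w where "y = act s1 s2 w x" unfolding orbit_act by auto
    then have "y = fF s1 s2 (fst (nf w)) x" using assms by (simp add: act_nf)
    then have "y = fF s1 s2 (int (nat (fst (nf w) mod int (r x)))) x" using fF_mod by metis
    then show "y \<in> (\<lambda>k. fF s1 s2 (int k) x) ` {0..<r x}"
      using mod_lt[of "fst (nf w)" x] by (intro image_eqI[where x="nat (fst (nf w) mod int (r x))"]) simp_all
  qed
  show "(\<lambda>k. fF s1 s2 (int k) x) ` {0..<r x} \<subseteq> Orb x"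
    using orbit_fF orbit_self by auto
qed

lemma cardA: "s1 x = x \<Longrightarrow> card (Orb x) = r x"
  by (simp add: orbA card_image[OF inj_fF])

lemma stabA: "s1 x = x \<Longrightarrow> act s1 s2 w x = x \<longleftrightarrow> int (card (Orb x)) dvd fst (nf w)"
  by (simp add: cardA act_nf fF_fix_iff)

lemma reflect_fix:
  assumes "fF s1 s2 k (s1 x) = x"
  shows "\<exists>y\<in>Orb x. s1 y = y \<or> s2 y = y"
proof -
  define a where "a = k div 2"
  define y where "y = fF s1 s2 (-a) x"
  have yO: "y \<in> Orb x" unfolding y_def using orbit_fF orbit_self by auto
  have sy: "s1 y = fF s1 s2 a (s1 x)" unfolding y_def by (simp add: fF_s1)
  have bk: "fF s1 s2 (-a) (fF s1 s2 a z) = z" for z by (simp flip: fF_add)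
  show ?thesis
  proof (cases "even k")
    case True
    then have "k = a + a" unfolding a_def by auto
    moreover have "fF s1 s2 a (s1 y) = fF s1 s2 (a + a) (s1 x)" by (simp only: sy fF_add)
    ultimately have "fF s1 s2 a (s1 y) = x" using assms by simp
    then have "fF s1 s2 (-a) (fF s1 s2 a (s1 y)) = y" unfolding y_def by simp
    then have "s1 y = y" by (simp add: bk)
    then show ?thesis using yO by blast
  next
    case False
    then have "k = a + 1 + a" unfolding a_def by presburger
    moreover have "fF s1 s2 a (fF s1 s2 1 (s1 y)) = fF s1 s2 (a + 1 + a) (s1 x)" by (simp only: sy fF_add)
    ultimately have "fF s1 s2 a (fF s1 s2 1 (s1 y)) = x" using assms by simp
    then have "fF s1 s2 a (s2 y) = x" by (simp flip: s2_fF)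
    then have "fF s1 s2 (-a) (fF s1 s2 a (s2 y)) = y" unfolding y_def by simp
    then have "s2 y = y" by (simp add: bk)
    then show ?thesis using yO by blast
  qed
qed

context
  fixes x assumes nofix: "\<forall>y\<in>Orb x. s1 y \<noteq> y \<and> s2 y \<noteq> y"
begin

lemma no_refl: "fF s1 s2 k (s1 x) \<noteq> x"
  using reflect_fix nofix by blast

lemma orbC: "Orb x = (\<lambda>k. fF s1 s2 (int k) x) ` {0..<r x} \<union> (\<lambda>k. fF s1 s2 (int k) (s1 x)) ` {0..<r x}"
proof
  show "Orb x \<subseteq> (\<lambda>k. fF s1 s2 (int k) x) ` {0..<r x} \<union> (\<lambda>k. fF s1 s2 (int k) (s1 x)) ` {0..<r x}"
  proof
    fix y assume "y \<in> Orb x"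
    then obtain w where w: "y = act s1 s2 w x" unfolding orbit_act by auto
    show "y \<in> (\<lambda>k. fF s1 s2 (int k) x) ` {0..<r x} \<union> (\<lambda>k. fF s1 s2 (int k) (s1 x)) ` {0..<r x}"
    proof (cases "snd (nf w)")
      case True
      then have "y = fF s1 s2 (int (nat (fst (nf w) mod int (r x)))) (s1 x)" using w fF_s1_mod by (simp add: act_nf)
      then show ?thesis
        using mod_lt[of "fst (nf w)" x] by (intro UnI2 image_eqI[where x="nat (fst (nf w) mod int (r x))"]) simp_all
    next
      case False
      then have "y = fF s1 s2 (int (nat (fst (nf w) mod int (r x)))) x" using w fF_mod by (simp add: act_nf)
      then show ?thesis
        using mod_lt[of "fst (nf w)" x] by (intro UnI1 image_eqI[where x="nat (fst (nf w) mod int (r x))"]) simp_all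
    qed
  qed
  show "(\<lambda>k. fF s1 s2 (int k) x) ` {0..<r x} \<union> (\<lambda>k. fF s1 s2 (int k) (s1 x)) ` {0..<r x} \<subseteq> Orb x"
    using orbit_fF orbit_self orbit_s1 by auto
qed

lemma cardC: "card (Orb x) = 2 * r x"
proof -
  have disj: "(\<lambda>k. fF s1 s2 (int k) x) ` {0..<r x} \<inter> (\<lambda>k. fF s1 s2 (int k) (s1 x)) ` {0..<r x} = {}"
  proof (rule ccontr)
    assume "\<not> ?thesis"
    then obtain a b where "fF s1 s2 (int a) x = fF s1 s2 (int b) (s1 x)" by auto
    then have "fF s1 s2 (- int a) (fF s1 s2 (int a) x) = fF s1 s2 (- int a) (fF s1 s2 (int b) (s1 x))" by simp
    then have "x = fF s1 s2 (- int a + int b) (s1 x)" by (simp flip: fF_add)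
    then show False using no_refl by metis
  qed
  show ?thesis
    by (simp add: orbC card_Un_disjoint[OF _ _ disj] card_image[OF inj_fF] card_image[OF inj_fF_s1])
qed

lemma stabC: "act s1 s2 w x = x \<longleftrightarrow> \<not> snd (nf w) \<and> int (card (Orb x) div 2) dvd fst (nf w)"
  by (simp add: cardC act_nf fF_fix_iff no_refl)

end

end


lemma odd_dvd2: "odd (R::nat) \<Longrightarrow> int R dvd 2 * j \<Longrightarrow> int R dvd j"
  by (simp add: coprime_dvd_mult_right_iff)

lemma even_dvd2:
  assumes "(R::nat) = 2 * m" "int R dvd 2 * j"
  shows "int R dvd j \<or> int R dvd j - int m"
proof -
  have "2 * int m dvd 2 * j" using assms by simp
  then have "int m dvd j" by (simp add: dvd_times_left_cancel_iff)
  then obtain q where q: "j = int m * q" by auto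
  show ?thesis
  proof (cases "even q")
    case True
    then obtain q' where "q = 2 * q'" by auto
    then have "j = int R * q'" using q assms by simp
    then show ?thesis by simp
  next
    case False
    then obtain q' where "q = 2 * q' + 1" using oddE by blast
    then have "j - int m = int R * q'" using q assms by (simp add: algebra_simps)
    then show ?thesis by simp
  qed
qed


context invSn begin

lemma orbA_range: "s1 x = x \<Longrightarrow> Orb x = range (\<lambda>j. fF s1 s2 j x)"
  using orbA orbit_fF orbit_self by fastforce

lemma fixA:
  assumes sx: "s1 x = x"
  shows "(num_fixed s1 (Orb x) = 1 \<and> num_fixed s2 (Orb x) = 1) \<or> (num_fixed s1 (Orb x) = 2 \<and> num_fixed s2 (Orb x) = 0)"
proof -
  let ?R = "r x"
  have s1f: "s1 (fF s1 s2 j x) = fF s1 s2 (-j) x" for j by (simp add: fF_s1 sx)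
  have s2f: "s2 (fF s1 s2 j x) = fF s1 s2 (1 - j) x" for j
    by (subst s2_fF) (simp add: s1f flip: fF_add)
  have S1: "{y \<in> Orb x. s1 y = y} = (\<lambda>j. fF s1 s2 j x) ` {j. int ?R dvd 2 * j}"
  proof -
    have "s1 (fF s1 s2 j x) = fF s1 s2 j x \<longleftrightarrow> int ?R dvd 2 * j" for j
    proof -
      have "s1 (fF s1 s2 j x) = fF s1 s2 j x \<longleftrightarrow> int ?R dvd (- j - j)" by (simp add: s1f fF_eq_iff)
      also have "- j - j = - (2 * j)" by simp
      finally show ?thesis by simp
    qed
    then show ?thesis unfolding orbA_range[OF sx] by auto
  qed
  have S2: "{y \<in> Orb x. s2 y = y} = (\<lambda>j. fF s1 s2 j x) ` {j. int ?R dvd 1 - 2 * j}"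
  proof -
    have "s2 (fF s1 s2 j x) = fF s1 s2 j x \<longleftrightarrow> int ?R dvd 1 - 2 * j" for j
    proof -
      have "s2 (fF s1 s2 j x) = fF s1 s2 j x \<longleftrightarrow> int ?R dvd (1 - j - j)" by (simp add: s2f fF_eq_iff)
      also have "1 - j - j = 1 - 2 * j" by simp
      finally show ?thesis by simp
    qed
    then show ?thesis unfolding orbA_range[OF sx] by auto
  qed
  show ?thesis
  proof (cases "even ?R")
    case False
    define k0 where "k0 = (int ?R + 1) div 2"
    obtain t where t: "?R = 2 * t + 1" using False oddE by blast
    have k0: "1 - 2 * k0 = - int ?R" unfolding k0_def t by simp
    have A: "{y \<in> Orb x. s1 y = y} = {x}"
    proof -
      have "(\<lambda>j. fF s1 s2 j x) ` {j. int ?R dvd 2 * j} = {x}"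
      proof
        show "(\<lambda>j. fF s1 s2 j x) ` {j. int ?R dvd 2 * j} \<subseteq> {x}"
        proof
          fix y assume "y \<in> (\<lambda>j. fF s1 s2 j x) ` {j. int ?R dvd 2 * j}"
          then obtain j where j: "y = fF s1 s2 j x" "int ?R dvd 2 * j" by auto
          have "int ?R dvd j" using odd_dvd2[OF False j(2)] .
          then have "fF s1 s2 j x = x" using fF_fix_iff by blast
          then show "y \<in> {x}" using j(1) by simp
        qed
        show "{x} \<subseteq> (\<lambda>j. fF s1 s2 j x) ` {j. int ?R dvd 2 * j}"
          by (auto intro!: image_eqI[where x=0])
      qed
      then show ?thesis using S1 by simp
    qed
    have B: "{y \<in> Orb x. s2 y = y} = {fF s1 s2 k0 x}"
    proof -
      have "(\<lambda>j. fF s1 s2 j x) ` {j. int ?R dvd 1 - 2 * j} = {fF s1 s2 k0 x}"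
      proof
        show "(\<lambda>j. fF s1 s2 j x) ` {j. int ?R dvd 1 - 2 * j} \<subseteq> {fF s1 s2 k0 x}"
        proof
          fix y assume "y \<in> (\<lambda>j. fF s1 s2 j x) ` {j. int ?R dvd 1 - 2 * j}"
          then obtain j where j: "y = fF s1 s2 j x" "int ?R dvd 1 - 2 * j" by auto
          have "int ?R dvd (1 - 2 * j) - (1 - 2 * k0)" using j(2) k0 by simp
          moreover have "(1 - 2 * j) - (1 - 2 * k0) = 2 * (k0 - j)" by simp
          ultimately have "int ?R dvd k0 - j" using odd_dvd2[OF False] by metis
          then have "int ?R dvd j - k0" by (simp add: dvd_diff_commute)
          then show "y \<in> {fF s1 s2 k0 x}" using j(1) fF_eq_iff by simp
        qed
        show "{fF s1 s2 k0 x} \<subseteq> (\<lambda>j. fF s1 s2 j x) ` {j. int ?R dvd 1 - 2 * j}"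
          using k0 by auto
      qed
      then show ?thesis using S2 by simp
    qed
    show ?thesis using A B by (simp add: num_fixed_def)
  next
    case True
    then obtain m where m: "?R = 2 * m" by auto
    have mpos: "0 < m" using r_pos[of x] m by simp
    have B: "{y \<in> Orb x. s2 y = y} = {}"
    proof -
      have "\<not> int ?R dvd 1 - 2 * j" for j
      proof
        assume "int ?R dvd 1 - 2 * j"
        moreover have "(2::int) dvd int ?R" using m by simp
        ultimately have "(2::int) dvd 1 - 2 * j" using dvd_trans by blast
        then show False by presburger
      qed
      then show ?thesis using S2 by auto
    qed
    have ne: "fF s1 s2 (int m) x \<noteq> x"
    proof
      assume "fF s1 s2 (int m) x = x"
      then have "int ?R dvd int m" using fF_fix_iff by blast
      then have "?R dvd m" by simp
      then show False using m mpos by (simp add: nat_dvd_not_less)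
    qed
    have A: "{y \<in> Orb x. s1 y = y} = {x, fF s1 s2 (int m) x}"
    proof -
      have "(\<lambda>j. fF s1 s2 j x) ` {j. int ?R dvd 2 * j} = {x, fF s1 s2 (int m) x}"
      proof
        show "(\<lambda>j. fF s1 s2 j x) ` {j. int ?R dvd 2 * j} \<subseteq> {x, fF s1 s2 (int m) x}"
        proof
          fix y assume "y \<in> (\<lambda>j. fF s1 s2 j x) ` {j. int ?R dvd 2 * j}"
          then obtain j where j: "y = fF s1 s2 j x" "int ?R dvd 2 * j" by auto
          from even_dvd2[OF m j(2)] show "y \<in> {x, fF s1 s2 (int m) x}"
          proof
            assume "int ?R dvd j"
            then have "fF s1 s2 j x = x" using fF_fix_iff by blast
            then show ?thesis using j(1) by simp
          next
            assume "int ?R dvd j - int m"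
            then have "fF s1 s2 j x = fF s1 s2 (int m) x" using fF_eq_iff by blast
            then show ?thesis using j(1) by simp
          qed
        qed
        show "{x, fF s1 s2 (int m) x} \<subseteq> (\<lambda>j. fF s1 s2 j x) ` {j. int ?R dvd 2 * j}"
        proof -
          have "x \<in> (\<lambda>j. fF s1 s2 j x) ` {j. int ?R dvd 2 * j}"
            by (rule image_eqI[where x=0]) simp_all
          moreover have "fF s1 s2 (int m) x \<in> (\<lambda>j. fF s1 s2 j x) ` {j. int ?R dvd 2 * j}"
            by (rule image_eqI[where x="int m"]) (simp_all add: m)
          ultimately show ?thesis by simp
        qed
      qed
      then show ?thesis using S1 by simp
    qed
    show ?thesis unfolding num_fixed_def A B using ne by simp
  qed
qed

end



lemma invSn_swap: "invSn n s1 s2 \<Longrightarrow> invSn n s2 s1"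
  by (simp add: invSn_def)

lemma nfix_ex: "num_fixed s Or \<noteq> 0 \<Longrightarrow> \<exists>y\<in>Or. s y = y"
  unfolding num_fixed_def by (metis (mono_tags, lifting) card.empty empty_Collect_eq)

lemma nfix_none: "finite Or \<Longrightarrow> num_fixed s Or = 0 \<Longrightarrow> \<forall>y\<in>Or. s y \<noteq> y"
  unfolding num_fixed_def by auto

lemma type_cases:
  "orbit_type s1 s2 Or = 1 \<Longrightarrow> num_fixed s1 Or = 0 \<and> num_fixed s2 Or = 0"
  "orbit_type s1 s2 Or = 2 \<Longrightarrow> num_fixed s1 Or = 1"
  "orbit_type s1 s2 Or = 3 \<Longrightarrow> num_fixed s1 Or = 2"
  "orbit_type s1 s2 Or = 4 \<Longrightarrow> num_fixed s2 Or = 2"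
  by (auto simp: orbit_type_def split: if_splits)

lemma type_ok:
  assumes I: "invSn n s1 s2" and x: "x \<in> {1..n}"
  shows "orbit_type s1 s2 (dih_orbit s1 s2 x) \<in> {1,2,3,4}"
proof -
  let ?O = "dih_orbit s1 s2 x"
  have fin: "finite ?O" using invSn.orbit_finite[OF I x] .
  show ?thesis
  proof (cases "\<exists>y\<in>?O. s1 y = y")
    case True
    then obtain y where y: "y \<in> ?O" "s1 y = y" by blast
    have "dih_orbit s1 s2 y = ?O" using invSn.orbit_same[OF I y(1)] .
    then show ?thesis using invSn.fixA[OF I y(2)] by (auto simp: orbit_type_def)
  next
    case F1: False
    show ?thesis
    proof (cases "\<exists>y\<in>?O. s2 y = y")
      case True
      then obtain y where y: "y \<in> ?O" "s2 y = y" by blast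
      have "dih_orbit s1 s2 y = ?O" using invSn.orbit_same[OF I y(1)] .
      then have "dih_orbit s2 s1 y = ?O" by (simp add: orbit_swap)
      then show ?thesis using invSn.fixA[OF invSn_swap[OF I] y(2)] by (auto simp: orbit_type_def)
    next
      case False
      then have "{y\<in>?O. s1 y = y} = {}" "{y\<in>?O. s2 y = y} = {}" using F1 by auto
      then have "num_fixed s1 ?O = 0" "num_fixed s2 ?O = 0" by (simp_all only: num_fixed_def card.empty)
      then show ?thesis by (simp add: orbit_type_def)
    qed
  qed
qed

lemma stab_equal:
  assumes I: "invSn n s1 s2" and J: "invSn n t1 t2" and x: "x \<in> {1..n}" and x': "x' \<in> {1..n}"
    and T: "orbit_type s1 s2 (dih_orbit s1 s2 x) = orbit_type t1 t2 (dih_orbit t1 t2 x')"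
    and T4: "orbit_type s1 s2 (dih_orbit s1 s2 x) \<in> {1,2,3,4}"
    and C: "card (dih_orbit s1 s2 x) = card (dih_orbit t1 t2 x')"
  shows "\<exists>x0\<in>dih_orbit s1 s2 x. \<exists>x0'\<in>dih_orbit t1 t2 x'. \<forall>w. act s1 s2 w x0 = x0 \<longleftrightarrow> act t1 t2 w x0' = x0'"
proof -
  let ?O = "dih_orbit s1 s2 x" and ?O' = "dih_orbit t1 t2 x'"
  have fin: "finite ?O" using invSn.orbit_finite[OF I x] .
  have fin': "finite ?O'" using invSn.orbit_finite[OF J x'] .
  consider "orbit_type s1 s2 ?O = 1" | "orbit_type s1 s2 ?O = 2 \<or> orbit_type s1 s2 ?O = 3"
    | "orbit_type s1 s2 ?O = 4" using T4 by auto
  then show ?thesis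
  proof cases
    case 1
    then have a: "\<forall>y\<in>?O. s1 y \<noteq> y \<and> s2 y \<noteq> y" using type_cases(1) nfix_none[OF fin] by metis
    from 1 T have "\<forall>y\<in>?O'. t1 y \<noteq> y \<and> t2 y \<noteq> y" using type_cases(1) nfix_none[OF fin'] by metis
    then have "\<forall>w. act s1 s2 w x = x \<longleftrightarrow> act t1 t2 w x' = x'"
      using invSn.stabC[OF I a] invSn.stabC[OF J] C by simp
    then show ?thesis using orbit_self by blast
  next
    case 2
    then have "num_fixed s1 ?O \<noteq> 0" using type_cases(2,3) by fastforce
    then obtain y where y: "y \<in> ?O" "s1 y = y" using nfix_ex by blast
    from 2 T have "num_fixed t1 ?O' \<noteq> 0" using type_cases(2,3) by fastforce
    then obtain y' where y': "y' \<in> ?O'" "t1 y' = y'" using nfix_ex by blast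
    have e: "dih_orbit s1 s2 y = ?O" "dih_orbit t1 t2 y' = ?O'"
      using invSn.orbit_same[OF I y(1)] invSn.orbit_same[OF J y'(1)] by auto
    have "\<forall>w. act s1 s2 w y = y \<longleftrightarrow> act t1 t2 w y' = y'"
      using invSn.stabA[OF I y(2)] invSn.stabA[OF J y'(2)] C e by simp
    then show ?thesis using y y' by blast
  next
    case 3
    then have "num_fixed s2 ?O \<noteq> 0" using type_cases(4) by fastforce
    then obtain y where y: "y \<in> ?O" "s2 y = y" using nfix_ex by blast
    from 3 T have "num_fixed t2 ?O' \<noteq> 0" using type_cases(4) by fastforce
    then obtain y' where y': "y' \<in> ?O'" "t2 y' = y'" using nfix_ex by blast
    have e: "dih_orbit s2 s1 y = ?O" "dih_orbit t2 t1 y' = ?O'"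
      using invSn.orbit_same[OF I y(1)] invSn.orbit_same[OF J y'(1)] by (auto simp: orbit_swap)
    have "act s1 s2 w y = y \<longleftrightarrow> act t1 t2 w y' = y'" for w
    proof -
      have "act s1 s2 w y = y \<longleftrightarrow> act s2 s1 (map Not w) y = y" by (simp add: act_swap)
      also have "\<dots> \<longleftrightarrow> act t2 t1 (map Not w) y' = y'"
        using invSn.stabA[OF invSn_swap[OF I] y(2)] invSn.stabA[OF invSn_swap[OF J] y'(2)] C e by simp
      also have "\<dots> \<longleftrightarrow> act t1 t2 w y' = y'" by (simp add: act_swap)
      finally show ?thesis .
    qed
    then show ?thesis using y y' by blast
  qed
qed

lemma iso_from_stab:
  assumes I: "invpair s1 s2" and J: "invpair t1 t2"
    and S: "\<forall>w. act s1 s2 w x0 = x0 \<longleftrightarrow> act t1 t2 w x0' = x0'"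
  shows "\<exists>h. bij_betw h (dih_orbit s1 s2 x0) (dih_orbit t1 t2 x0') \<and>
    (\<forall>y\<in>dih_orbit s1 s2 x0. h (s1 y) = t1 (h y) \<and> h (s2 y) = t2 (h y))"
proof -
  have wd: "act s1 s2 u x0 = act s1 s2 v x0 \<longleftrightarrow> act t1 t2 u x0' = act t1 t2 v x0'" for u v
  proof -
    have gen: "act a1 a2 u z = act a1 a2 v z \<longleftrightarrow> act a1 a2 (rev v @ u) z = z" if "invpair a1 a2" for a1 a2 z
    proof
      assume "act a1 a2 u z = act a1 a2 v z"
      then show "act a1 a2 (rev v @ u) z = z" using invpair.act_rev[OF that] invpair.act_append[OF that] by metis
    next
      assume "act a1 a2 (rev v @ u) z = z"
      then have "act a1 a2 v (act a1 a2 (rev v) (act a1 a2 u z)) = act a1 a2 v z"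
        using invpair.act_append[OF that] by metis
      then show "act a1 a2 u z = act a1 a2 v z"
        using invpair.act_rev[OF that, of "rev v"] by simp
    qed
    show ?thesis using gen[OF I] gen[OF J] S by simp
  qed
  define h where "h y = act t1 t2 (SOME w. act s1 s2 w x0 = y) x0'" for y
  have hact: "h (act s1 s2 u x0) = act t1 t2 u x0'" for u
  proof -
    have "act s1 s2 (SOME w. act s1 s2 w x0 = act s1 s2 u x0) x0 = act s1 s2 u x0"
      by (rule someI[where x=u]) simp
    then show ?thesis unfolding h_def using wd by blast
  qed
  have "bij_betw h (dih_orbit s1 s2 x0) (dih_orbit t1 t2 x0')"
    unfolding bij_betw_def
  proof
    show "inj_on h (dih_orbit s1 s2 x0)"
      unfolding orbit_act by (rule inj_onI) (auto simp: hact wd)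
    show "h ` dih_orbit s1 s2 x0 = dih_orbit t1 t2 x0'"
      unfolding orbit_act by (auto simp: hact image_iff)
  qed
  moreover have "\<forall>y\<in>dih_orbit s1 s2 x0. h (s1 y) = t1 (h y) \<and> h (s2 y) = t2 (h y)"
  proof
    fix y assume "y \<in> dih_orbit s1 s2 x0"
    then obtain u where u: "y = act s1 s2 u x0" unfolding orbit_act by auto
    have "h (act s1 s2 (True # u) x0) = act t1 t2 (True # u) x0'" "h (act s1 s2 (False # u) x0) = act t1 t2 (False # u) x0'"
      by (rule hact)+
    then show "h (s1 y) = t1 (h y) \<and> h (s2 y) = t2 (h y)" using u hact[of u] by simp
  qed
  ultimately show ?thesis by blast
qed

lemma orbit_iso:
  assumes I: "invSn n s1 s2" and J: "invSn n t1 t2" and x: "x \<in> {1..n}" and x': "x' \<in> {1..n}"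
    and T: "orbit_type s1 s2 (dih_orbit s1 s2 x) = orbit_type t1 t2 (dih_orbit t1 t2 x')"
    and C: "card (dih_orbit s1 s2 x) = card (dih_orbit t1 t2 x')"
  shows "\<exists>h. bij_betw h (dih_orbit s1 s2 x) (dih_orbit t1 t2 x') \<and>
    (\<forall>y\<in>dih_orbit s1 s2 x. h (s1 y) = t1 (h y) \<and> h (s2 y) = t2 (h y))"
proof -
  obtain x0 x0' where x0: "x0 \<in> dih_orbit s1 s2 x" and x0': "x0' \<in> dih_orbit t1 t2 x'"
    and S: "\<forall>w. act s1 s2 w x0 = x0 \<longleftrightarrow> act t1 t2 w x0' = x0'"
    using stab_equal[OF I J x x' T type_ok[OF I x] C] by blast
  have e: "dih_orbit s1 s2 x0 = dih_orbit s1 s2 x" "dih_orbit t1 t2 x0' = dih_orbit t1 t2 x'"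
    using invSn.orbit_same[OF I x0] invSn.orbit_same[OF J x0'] by auto
  have "invpair s1 s2" "invpair t1 t2"
    using invSn.ii1[OF I] invSn.ii2[OF I] invSn.ii1[OF J] invSn.ii2[OF J] by (auto simp: invpair_def)
  from iso_from_stab[OF this S] show ?thesis unfolding e .
qed



lemma mset_bij:
  assumes "finite X" "finite Y" "image_mset c (mset_set X) = image_mset c (mset_set Y)"
  shows "\<exists>\<phi>. bij_betw \<phi> X Y \<and> (\<forall>x\<in>X. c (\<phi> x) = c x)"
  using assms
proof (induction X arbitrary: Y rule: finite_induct)
  case empty
  then have "Y = {}" by (metis image_mset_is_empty_iff mset_set.empty mset_set_empty_iff)
  then show ?case by auto
next
  case (insert x X)
  have eq: "add_mset (c x) (image_mset c (mset_set X)) = image_mset c (mset_set Y)"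
    using insert by simp
  then have "c x \<in># image_mset c (mset_set Y)" by (metis union_single_eq_member)
  then obtain y where y: "y \<in> Y" "c y = c x" using insert(4) by auto
  have "mset_set Y = add_mset y (mset_set (Y - {y}))" using y(1) insert(4) by (simp add: mset_set.remove)
  then have "image_mset c (mset_set X) = image_mset c (mset_set (Y - {y}))" using eq y(2) by simp
  then obtain \<phi> where phi: "bij_betw \<phi> X (Y - {y})" "\<forall>x\<in>X. c (\<phi> x) = c x"
    using insert(3)[of "Y - {y}"] insert(4) by auto
  let ?\<psi> = "\<phi>(x := y)"
  have "bij_betw ?\<psi> X (Y - {y})" using phi(1) insert(2) by (subst bij_betw_cong[where g=\<phi>]) auto
  then have "bij_betw ?\<psi> (insert x X) (insert y (Y - {y}))"
    using notIn_Un_bij_betw3[of x X ?\<psi> "Y - {y}"] insert(2) by simp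
  moreover have "insert y (Y - {y}) = Y" using y(1) by auto
  ultimately have "bij_betw ?\<psi> (insert x X) Y" by simp
  moreover have "\<forall>z\<in>insert x X. c (?\<psi> z) = c z" using phi(2) y(2) insert(2) by auto
  ultimately show ?case by blast
qed


lemma conj_commute:
  assumes g: "g permutes S" and t: "t = g \<circ> s \<circ> inv g"
  shows "t (g x) = g (s x)"
  using t permutes_inverses(2)[OF g] by simp

lemma act_conj:
  assumes g: "g permutes S" and "t1 = g \<circ> s1 \<circ> inv g" "t2 = g \<circ> s2 \<circ> inv g"
  shows "act t1 t2 w (g x) = g (act s1 s2 w x)"
  by (induction w) (auto simp: conj_commute[OF g assms(2)] conj_commute[OF g assms(3)])

lemma orbit_conj:
  assumes g: "g permutes S" and "t1 = g \<circ> s1 \<circ> inv g" "t2 = g \<circ> s2 \<circ> inv g"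
  shows "dih_orbit t1 t2 (g x) = g ` dih_orbit s1 s2 x"
  unfolding orbit_act act_conj[OF assms] by auto

lemma num_fixed_conj:
  assumes g: "g permutes S" and t: "t = g \<circ> s \<circ> inv g"
  shows "num_fixed t (g ` Or) = num_fixed s Or"
proof -
  have inj: "inj g" using g permutes_inj by blast
  have "{y \<in> g ` Or. t y = y} = g ` {x \<in> Or. s x = x}"
    using conj_commute[OF g t] inj by (auto simp: inj_eq)
  then show ?thesis unfolding num_fixed_def
    by (simp add: card_image inj_on_subset[OF inj])
qed

lemma decomp_conj:
  assumes g: "g permutes {1..n}" and t1: "t1 = g \<circ> s1 \<circ> inv g" and t2: "t2 = g \<circ> s2 \<circ> inv g"
  shows "dihedral_decomp n s1 s2 = dihedral_decomp n t1 t2"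
proof
  fix t
  have inj: "inj g" using g permutes_inj by blast
  have orbs: "dih_orbits n t1 t2 = image g ` dih_orbits n s1 s2"
  proof -
    have "dih_orbits n t1 t2 = dih_orbit t1 t2 ` (g ` {1..n})"
      unfolding dih_orbits_def using permutes_image[OF g] by simp
    also have "\<dots> = image g ` dih_orbits n s1 s2"
      unfolding dih_orbits_def image_image orbit_conj[OF g t1 t2] by simp
    finally show ?thesis .
  qed
  have ty: "orbit_type t1 t2 (g ` Or) = orbit_type s1 s2 Or" for Or
    unfolding orbit_type_def num_fixed_conj[OF g t1] num_fixed_conj[OF g t2] ..
  have sets: "{Or \<in> dih_orbits n t1 t2. orbit_type t1 t2 Or = t} = image g ` {Or \<in> dih_orbits n s1 s2. orbit_type s1 s2 Or = t}"
    unfolding orbs using ty by auto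
  have injI: "inj_on (image g) A" for A using inj by (simp add: inj_on_def inj_image_eq_iff)
  have "image_mset card (mset_set (image g ` A)) = image_mset card (mset_set A)" for A
  proof -
    have "image_mset card (mset_set (image g ` A)) = image_mset card (image_mset (image g) (mset_set A))"
      by (simp add: image_mset_mset_set[OF injI])
    also have "\<dots> = image_mset (\<lambda>X. card (g ` X)) (mset_set A)" by (simp add: multiset.map_comp comp_def)
    also have "\<dots> = image_mset card (mset_set A)"
      by (rule image_mset_cong) (simp add: card_image inj_on_subset[OF inj])
    finally show ?thesis .
  qed
  then show "dihedral_decomp n s1 s2 t = dihedral_decomp n t1 t2 t"
    unfolding dihedral_decomp_def sets by simp
qed



lemma decomp_conj_rev:
  assumes I: "invSn n s1 s2" and J: "invSn n t1 t2"
    and D: "dihedral_decomp n s1 s2 = dihedral_decomp n t1 t2"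
  shows "\<exists>g. g permutes {1..n} \<and> t1 = g \<circ> s1 \<circ> inv g \<and> t2 = g \<circ> s2 \<circ> inv g"
proof -
  let ?Os = "dih_orbits n s1 s2" and ?Ot = "dih_orbits n t1 t2"
  let ?ty = "orbit_type s1 s2" and ?ty' = "orbit_type t1 t2"
  define X where "X t = {Or \<in> ?Os. ?ty Or = t}" for t
  define Y where "Y t = {Or \<in> ?Ot. ?ty' Or = t}" for t
  have finOs: "finite ?Os" "finite ?Ot" unfolding dih_orbits_def by auto
  have "\<forall>t\<in>{1..4}. \<exists>\<phi>. bij_betw \<phi> (X t) (Y t) \<and> (\<forall>Or\<in>X t. card (\<phi> Or) = card Or)"
  proof
    fix t :: nat assume t: "t \<in> {1..4}"
    have "image_mset card (mset_set (X t)) = image_mset card (mset_set (Y t))"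
      using fun_cong[OF D, of t] t unfolding dihedral_decomp_def X_def Y_def by simp
    then show "\<exists>\<phi>. bij_betw \<phi> (X t) (Y t) \<and> (\<forall>Or\<in>X t. card (\<phi> Or) = card Or)"
      by (intro mset_bij) (use finOs in \<open>auto simp: X_def Y_def\<close>)
  qed
  then obtain \<Phi> where Phi: "\<And>t. t \<in> {1..4} \<Longrightarrow> bij_betw (\<Phi> t) (X t) (Y t) \<and> (\<forall>Or\<in>X t. card (\<Phi> t Or) = card Or)"
    by metis
  define \<phi> where "\<phi> Or = \<Phi> (?ty Or) Or" for Or
  have tyOs: "?ty Or \<in> {1..4}" if OrO: "Or \<in> ?Os" for Or
  proof -
    obtain x where "x \<in> {1..n}" "Or = dih_orbit s1 s2 x" using OrO unfolding dih_orbits_def by auto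
    then have "?ty Or \<in> {1,2,3,4}" using type_ok[OF I] by simp
    then show ?thesis by auto
  qed
  have phi: "\<phi> Or \<in> ?Ot \<and> ?ty' (\<phi> Or) = ?ty Or \<and> card (\<phi> Or) = card Or" if "Or \<in> ?Os" for Or
  proof -
    have "Or \<in> X (?ty Or)" using that by (simp add: X_def)
    then show ?thesis using Phi[OF tyOs[OF that]] unfolding \<phi>_def bij_betw_def Y_def by auto
  qed
  have phi_inj: "Or1 = Or2" if "Or1 \<in> ?Os" "Or2 \<in> ?Os" "\<phi> Or1 = \<phi> Or2" for Or1 Or2
  proof -
    have tt: "?ty Or1 = ?ty Or2" using phi[OF that(1)] phi[OF that(2)] that(3) by metis
    have "Or1 \<in> X (?ty Or1)" "Or2 \<in> X (?ty Or1)" using that tt by (auto simp: X_def)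
    moreover have "inj_on (\<Phi> (?ty Or1)) (X (?ty Or1))" using Phi[OF tyOs[OF that(1)]] bij_betw_def by blast
    ultimately show ?thesis using that(3) tt unfolding \<phi>_def by (metis inj_onD)
  qed
  have "\<forall>Or\<in>?Os. \<exists>h. bij_betw h Or (\<phi> Or) \<and> (\<forall>y\<in>Or. h (s1 y) = t1 (h y) \<and> h (s2 y) = t2 (h y))"
  proof
    fix Or assume Or: "Or \<in> ?Os"
    then obtain x where x: "x \<in> {1..n}" "Or = dih_orbit s1 s2 x" unfolding dih_orbits_def by auto
    obtain x' where x': "x' \<in> {1..n}" "\<phi> Or = dih_orbit t1 t2 x'" using phi[OF Or] unfolding dih_orbits_def by auto
    show "\<exists>h. bij_betw h Or (\<phi> Or) \<and> (\<forall>y\<in>Or. h (s1 y) = t1 (h y) \<and> h (s2 y) = t2 (h y))"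
      unfolding x(2) x'(2) using orbit_iso[OF I J x(1) x'(1)] phi[OF Or] x x' by simp
  qed
  then obtain H where H: "\<And>Or. Or \<in> ?Os \<Longrightarrow> bij_betw (H Or) Or (\<phi> Or) \<and> (\<forall>y\<in>Or. H Or (s1 y) = t1 (H Or y) \<and> H Or (s2 y) = t2 (H Or y))"
    by metis
  define g where "g x = (if x \<in> {1..n} then H (dih_orbit s1 s2 x) x else x)" for x
  have OsI: "dih_orbit s1 s2 x \<in> ?Os" if "x \<in> {1..n}" for x using that unfolding dih_orbits_def by auto
  have gin: "g x \<in> \<phi> (dih_orbit s1 s2 x)" if "x \<in> {1..n}" for x
    using H[OF OsI[OF that]] orbit_self[of x s1 s2] that unfolding g_def bij_betw_def by auto
  have gS: "g x \<in> {1..n}" if xS: "x \<in> {1..n}" for x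
  proof -
    obtain x' where "x' \<in> {1..n}" "\<phi> (dih_orbit s1 s2 x) = dih_orbit t1 t2 x'"
      using phi[OF OsI[OF xS]] unfolding dih_orbits_def by auto
    then show ?thesis using gin[OF xS] invSn.orbit_sub[OF J] by blast
  qed
  have ginj: "inj_on g {1..n}"
  proof (rule inj_onI)
    fix x y assume x: "x \<in> {1..n}" and y: "y \<in> {1..n}" and e: "g x = g y"
    obtain x' where x': "x' \<in> {1..n}" "\<phi> (dih_orbit s1 s2 x) = dih_orbit t1 t2 x'"
      using phi[OF OsI[OF x]] unfolding dih_orbits_def by auto
    obtain y' where y': "y' \<in> {1..n}" "\<phi> (dih_orbit s1 s2 y) = dih_orbit t1 t2 y'"
      using phi[OF OsI[OF y]] unfolding dih_orbits_def by auto
    have "\<phi> (dih_orbit s1 s2 x) = dih_orbit t1 t2 (g x)"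
      using invSn.orbit_same[OF J] gin[OF x] x' by metis
    moreover have "\<phi> (dih_orbit s1 s2 y) = dih_orbit t1 t2 (g y)"
      using invSn.orbit_same[OF J] gin[OF y] y' by metis
    ultimately have "dih_orbit s1 s2 x = dih_orbit s1 s2 y" using phi_inj[OF OsI[OF x] OsI[OF y]] e by simp
    moreover have "inj_on (H (dih_orbit s1 s2 x)) (dih_orbit s1 s2 x)"
      using H[OF OsI[OF x]] bij_betw_def by blast
    moreover have "H (dih_orbit s1 s2 x) x = H (dih_orbit s1 s2 x) y"
      using e x y calculation(1) unfolding g_def by simp
    ultimately show "x = y" using orbit_self[of x s1 s2] orbit_self[of y s1 s2]
      by (metis inj_onD)
  qed
  have "g ` {1..n} \<subseteq> {1..n}" using gS by blast
  then have "g ` {1..n} = {1..n}" by (rule endo_inj_surj[OF finite_atLeastAtMost _ ginj])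
  then have gbij: "bij_betw g {1..n} {1..n}" using ginj by (simp add: bij_betw_def)
  have gp: "g permutes {1..n}" by (rule bij_imp_permutes[OF gbij]) (simp only: g_def if_False)
  have p1: "s1 permutes {1..n}" "s2 permutes {1..n}" "t1 permutes {1..n}" "t2 permutes {1..n}"
    using invSn.p1 invSn.p2 I J by blast+
  have comm: "g (s1 x) = t1 (g x) \<and> g (s2 x) = t2 (g x)" for x
  proof (cases "x \<in> {1..n}")
    case True
    have e1: "dih_orbit s1 s2 (s1 x) = dih_orbit s1 s2 x"
      by (rule invSn.orbit_same[OF I]) (rule orbit_s1[OF orbit_self])
    have e2: "dih_orbit s1 s2 (s2 x) = dih_orbit s1 s2 x"
      by (rule invSn.orbit_same[OF I]) (rule orbit_s2[OF orbit_self])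
    have "s1 x \<in> {1..n}" "s2 x \<in> {1..n}"
      by (simp_all only: permutes_in_image[OF p1(1)] permutes_in_image[OF p1(2)] True)
    moreover have "H (dih_orbit s1 s2 x) (s1 x) = t1 (H (dih_orbit s1 s2 x) x)"
      "H (dih_orbit s1 s2 x) (s2 x) = t2 (H (dih_orbit s1 s2 x) x)"
      using bspec[OF conjunct2[OF H[OF OsI[OF True]]] orbit_self[of x s1 s2]] by simp_all
    ultimately show ?thesis using True e1 e2 unfolding g_def by simp
  next
    case False
    have "s1 x = x" "s2 x = x" "t1 x = x" "t2 x = x"
      using permutes_not_in[OF p1(1) False] permutes_not_in[OF p1(2) False]
        permutes_not_in[OF p1(3) False] permutes_not_in[OF p1(4) False] by auto
    moreover have "g x = x" unfolding g_def using False by (simp only: if_False)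
    ultimately show ?thesis by simp
  qed
  have "t1 = g \<circ> s1 \<circ> inv g"
  proof
    fix y show "t1 y = (g \<circ> s1 \<circ> inv g) y"
      using comm[of "inv g y"] permutes_inverses(1)[OF gp] by simp
  qed
  moreover have "t2 = g \<circ> s2 \<circ> inv g"
  proof
    fix y show "t2 y = (g \<circ> s2 \<circ> inv g) y"
      using comm[of "inv g y"] permutes_inverses(1)[OF gp] by simp
  qed
  ultimately show ?thesis using gp by blast
qed

theorem lemma5p3:
  fixes n :: nat and s1 s2 s1' s2' :: "nat \<Rightarrow> nat"
  assumes "involution_Sn n s1" "involution_Sn n s2"
      and "involution_Sn n s1'" "involution_Sn n s2'"
  shows "(\<exists>g. g permutes {1..n} \<and> s1' = g \<circ> s1 \<circ> inv g \<and> s2' = g \<circ> s2 \<circ> inv g)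
         \<longleftrightarrow> dihedral_decomp n s1 s2 = dihedral_decomp n s1' s2'"
proof
  assume "\<exists>g. g permutes {1..n} \<and> s1' = g \<circ> s1 \<circ> inv g \<and> s2' = g \<circ> s2 \<circ> inv g"
  then show "dihedral_decomp n s1 s2 = dihedral_decomp n s1' s2'" using decomp_conj by blast
next
  assume "dihedral_decomp n s1 s2 = dihedral_decomp n s1' s2'"
  moreover have "invSn n s1 s2" "invSn n s1' s2'" using assms by (simp_all add: invSn_def)
  ultimately show "\<exists>g. g permutes {1..n} \<and> s1' = g \<circ> s1 \<circ> inv g \<and> s2' = g \<circ> s2 \<circ> inv g"
    using decomp_conj_rev by blast
qed


end
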